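(* Let $m$ be an odd positive integer, let $\tilde H\in\Omega_{2n}$ be invertible and Hermitian, and let $\tilde B\in\Omega_{2n}$ be $\tilde H$-selfadjoint with $\sigma(\tilde B)\subset(-\infty,0)$. Then there exists an $\tilde H$-selfadjoint $\tilde A\in\Omega_{2n}$ such that $\tilde A^m=\tilde B$.
   Context: $\Omega_{2n}=\{\begin{bmatrix}A_1&\bar A_2\\-A_2&\bar A_1\end{bmatrix}: A_1,A_2\in\mathbb{C}^{n\times n}\}\subset\mathbb{C}^{2n\times 2n}$. For an invertible Hermitian $H$, $A$ is $H$-selfadjoint if $HA=A^*H$. $\sigma(\cdot)$ denotes the spectrum. *)

theory Defs
  imports "Jordan_Normal_Form.Spectral_Radius" "Jordan_Normal_Form.Schur_Decomposition"
begin

definition Omega :: "nat \<Rightarrow> complex mat set" where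
  "Omega n = {M. M \<in> carrier_mat (2*n) (2*n) \<and>
     (\<exists>A1 A2. A1 \<in> carrier_mat n n \<and> A2 \<in> carrier_mat n n \<and>
        M = four_block_mat A1 (map_mat cnj A2) (- A2) (map_mat cnj A1))}"

definition hermitian_mat :: "complex mat \<Rightarrow> bool" where
  "hermitian_mat H \<longleftrightarrow> mat_adjoint H = H"

definition H_selfadjoint :: "complex mat \<Rightarrow> complex mat \<Rightarrow> bool" where
  "H_selfadjoint H A \<longleftrightarrow> H * A = mat_adjoint A * H"

end

theory Submission
  imports Defs
begin


lemma interp_exists:
  fixes f :: "real \<Rightarrow> real"
  assumes "finite S"
  shows "\<exists>p. \<forall>x\<in>S. poly p x = f x"
  using assms
proof (induction S rule: finite_induct)
  case empty
  then show ?case by auto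
next
  case (insert a S)
  then obtain p where p: "\<forall>x\<in>S. poly p x = f x" by auto
  define q where "q = (\<Prod>x\<in>S. [:-x,1:])"
  have q0: "poly q x = 0" if "x \<in> S" for x
    unfolding q_def poly_prod using insert(1) that by (auto intro!: prod_zero)
  have qa: "poly q a \<noteq> 0"
    unfolding q_def poly_prod using insert(1,2) by (auto simp: prod_zero_iff)
  define p' where "p' = p + Polynomial.smult ((f a - poly p a)/poly q a) q"
  have "\<forall>x\<in>insert a S. poly p' x = f x"
    using p q0 qa unfolding p'_def by auto
  then show ?case by blast
qed

lemma vanish_dvd:
  fixes q :: "real poly"
  assumes "finite S" "\<forall>x\<in>S. poly q x = 0"
  shows "(\<Prod>x\<in>S. [:-x,1:]) dvd q"
  using assms
proof (induction S arbitrary: q rule: finite_induct)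
  case empty
  then show ?case by auto
next
  case (insert a S)
  then have "poly q a = 0" by auto
  then obtain q' where q': "q = [:-a,1:] * q'" using poly_eq_0_iff_dvd by (metis dvdE)
  have "\<forall>x\<in>S. poly q' x = 0"
  proof
    fix x assume x: "x \<in> S"
    then have "poly q x = 0" using insert by auto
    moreover have "x \<noteq> a" using x insert(2) by auto
    ultimately show "poly q' x = 0" unfolding q' by auto
  qed
  from insert(3)[OF this] have "(\<Prod>x\<in>S. [:-x,1:]) dvd q'" .
  then show ?case unfolding q' using insert(1,2) by (simp add: mult_dvd_mono del: mult_pCons_left)
qed

lemma binom_first:
  fixes a b :: "'a :: comm_ring_1"
  shows "\<exists>c. (a+b)^Suc k = a^Suc k + of_nat (Suc k) * a^k * b + b^2 * c"
proof (induction k)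
  case 0
  show ?case by (rule exI[of _ 0]) simp
next
  case (Suc k)
  then obtain c where c: "(a+b)^Suc k = a^Suc k + of_nat (Suc k) * a^k * b + b^2 * c" by blast
  have "(a+b)^Suc (Suc k) = (a+b) * (a^Suc k + of_nat (Suc k) * a^k * b + b^2 * c)"
    using c by simp
  also have "\<dots> = a^Suc (Suc k) + of_nat (Suc (Suc k)) * a^(Suc k) * b
     + b^2 * (a*c + of_nat (Suc k) * a^k + b * c)"
    by (simp add: algebra_simps power2_eq_square)
  finally show ?case by blast
qed

lemma hensel_step:
  fixes r p s :: "real poly"
  assumes m: "m = Suc k" and a: "poly r 0 \<noteq> 0"
    and hs: "p^m - [:0,1:] = r^(Suc j) * s"
  shows "\<exists>p'. r^(Suc (Suc j)) dvd p'^m - [:0,1:]"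
proof -
  define a where "a = poly r 0"
  obtain t where rt: "r = pCons a t" unfolding a_def by (metis pCons_cases poly_0_coeff_0 coeff_pCons_0)
  have rt2: "r = [:a:] + [:0,1:] * t" unfolding rt by simp
  define w where "w = Polynomial.smult (-1/a) t"
  have xw: "[:0,1:] * w = 1 - Polynomial.smult (1/a) r"
    unfolding w_def rt2 using assms(2) a_def by (simp add: algebra_simps)
  define u where "u = w * p"
  define v where "v = - [:1/a:] + w * r^j * s"
  have pm: "p^m = [:0,1:] + r^(Suc j) * s" using hs by (simp add: algebra_simps)
  have uv: "u * p^k = 1 + r * v"
  proof -
    have "u * p^k = w * p^m" unfolding u_def m by simp
    also have "\<dots> = [:0,1:] * w + w * r^(Suc j) * s" unfolding pm by (simp add: algebra_simps)
    also have "\<dots> = 1 + r * v" unfolding xw v_def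
      by (simp add: algebra_simps)
    finally show ?thesis .
  qed
  define t' where "t' = Polynomial.smult (-1/of_nat m) (s*u)"
  define e where "e = r^(Suc j) * t'"
  obtain c where c: "(p+e)^m = p^m + of_nat m * p^k * e + e^2 * c"
    using binom_first[of p e k] m by auto
  have mt: "of_nat m * p^k * t' = - s * (1 + r * v)"
  proof -
    have "of_nat m * p^k * t' = Polynomial.smult (of_nat m) (Polynomial.smult (-1/of_nat m) (s * (u * p^k)))"
      unfolding t'_def by (simp add: algebra_simps of_nat_poly)
    also have "\<dots> = - (s * (u*p^k))" using m by simp
    finally show ?thesis unfolding uv by simp
  qed
  have "(p+e)^m - [:0,1:] = r^(Suc (Suc j)) * (- s * v + r^j * t'^2 * c)"
  proof -
    have "(p+e)^m - [:0,1:] = (p^m - [:0,1:]) + of_nat m * p^k * e + e^2 * c"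
      unfolding c by (simp add: algebra_simps)
    also have "\<dots> = r^(Suc j) * s + r^(Suc j) * (of_nat m * p^k * t') + e^2 * c"
      unfolding hs e_def by (simp add: algebra_simps)
    also have "\<dots> = r^(Suc (Suc j)) * (- s * v + r^j * t'^2 * c)"
      unfolding mt e_def by (simp add: algebra_simps power2_eq_square)
    finally show ?thesis .
  qed
  then have "r^(Suc (Suc j)) dvd (p+e)^m - [:0,1:]" by (metis dvd_triv_left)
  then show ?thesis by blast
qed

lemma hensel:
  fixes r p0 :: "real poly"
  assumes m: "m = Suc k" and a: "poly r 0 \<noteq> 0"
    and h0: "r dvd p0^m - [:0,1:]"
  shows "\<exists>p. r^j dvd p^m - [:0,1:]"
proof (cases j)
  case 0 then show ?thesis by auto
next
  case (Suc j')
  have "\<exists>p. r^(Suc i) dvd p^m - [:0,1:]" for i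
  proof (induction i)
    case 0 then show ?case using h0 by auto
  next
    case (Suc i)
    then obtain p s where "p^m - [:0,1:] = r^(Suc i) * s" by (auto elim: dvdE)
    from hensel_step[OF m a this] show ?case .
  qed
  then show ?thesis using Suc by auto
qed

lemma real_root_poly:
  fixes S :: "real set"
  assumes "finite S" "\<forall>x\<in>S. x < 0" "odd m"
  shows "\<exists>p. (\<Prod>x\<in>S. [:-x,1:])^j dvd p^m - [:0,1:]"
proof -
  obtain p0 where p0: "\<forall>x\<in>S. poly p0 x = root m x"
    using interp_exists[OF assms(1)] by blast
  have "\<forall>x\<in>S. poly (p0^m - [:0,1:]) x = 0"
    using p0 odd_real_root_pow[OF assms(3)] by simp
  from vanish_dvd[OF assms(1) this] have h0: "(\<Prod>x\<in>S. [:-x,1:]) dvd p0^m - [:0,1:]" .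
  have a: "poly (\<Prod>x\<in>S. [:-x,1:]) 0 \<noteq> 0"
    using assms(1,2) by (auto simp: poly_prod prod_zero_iff)
  from assms(3) obtain k where m: "m = Suc k" by (cases m) auto
  show ?thesis by (rule hensel[OF m a h0])
qed




fun hev :: "nat \<Rightarrow> complex mat \<Rightarrow> complex list \<Rightarrow> complex mat" where
  "hev d M [] = 0\<^sub>m d d"
| "hev d M (a # as) = a \<cdot>\<^sub>m 1\<^sub>m d + M * hev d M as"

definition mev :: "nat \<Rightarrow> complex poly \<Rightarrow> complex mat \<Rightarrow> complex mat" where
  "mev d p M = hev d M (coeffs p)"

lemma hev_carrier: "M \<in> carrier_mat d d \<Longrightarrow> hev d M xs \<in> carrier_mat d d"
  by (induction xs) auto

lemma mev_carrier[simp]: "M \<in> carrier_mat d d \<Longrightarrow> mev d p M \<in> carrier_mat d d"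
  unfolding mev_def by (rule hev_carrier)

lemma mev_dims[simp]: "M \<in> carrier_mat d d \<Longrightarrow> dim_row (mev d p M) = d"
  "M \<in> carrier_mat d d \<Longrightarrow> dim_col (mev d p M) = d"
  using carrier_matD[OF mev_carrier[of M d p]] by auto

lemma mev_0[simp]: "mev d 0 M = 0\<^sub>m d d"
  unfolding mev_def by simp

lemma mev_pCons:
  assumes M: "M \<in> carrier_mat d d"
  shows "mev d (pCons a p) M = a \<cdot>\<^sub>m 1\<^sub>m d + M * mev d p M"
proof (cases "p = 0 \<and> a = 0")
  case True
  then show ?thesis using M by (auto simp: mev_def)
next
  case False
  then have "coeffs (pCons a p) = a # coeffs p" by (auto simp: cCons_def)
  then show ?thesis unfolding mev_def by simp
qed

lemma mev_add:
  assumes M: "M \<in> carrier_mat d d"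
  shows "mev d (p + q) M = mev d p M + mev d q M"
proof (induction p q rule: poly_induct2)
  case 0
  then show ?case using M by simp
next
  case (pCons a p b q)
  have c: "mev d p M \<in> carrier_mat d d" "mev d q M \<in> carrier_mat d d" using M by auto
  have "mev d (pCons a p + pCons b q) M = (a+b) \<cdot>\<^sub>m 1\<^sub>m d + M * (mev d p M + mev d q M)"
    using pCons M by (simp add: mev_pCons)
  also have "\<dots> = (a \<cdot>\<^sub>m 1\<^sub>m d + M * mev d p M) + (b \<cdot>\<^sub>m 1\<^sub>m d + M * mev d q M)"
  proof -
    have "M * (mev d p M + mev d q M) = M * mev d p M + M * mev d q M"
      using c M by (intro mult_add_distrib_mat) auto
    then show ?thesis unfolding \<open>M * (mev d p M + mev d q M) = M * mev d p M + M * mev d q M\<close> using c M by (auto intro!: eq_matI simp: algebra_simps)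
  qed
  finally show ?case using M by (simp add: mev_pCons)
qed

lemma mev_smult:
  assumes M: "M \<in> carrier_mat d d"
  shows "mev d (Polynomial.smult c p) M = c \<cdot>\<^sub>m mev d p M"
proof (induction p)
  case 0
  then show ?case by simp
next
  case (pCons a p)
  have c: "mev d p M \<in> carrier_mat d d" using M by auto
  have "M * (c \<cdot>\<^sub>m mev d p M) = c \<cdot>\<^sub>m (M * mev d p M)"
    using M c by (rule mult_smult_distrib)
  then show ?case using pCons M c
    by (auto simp: mev_pCons intro!: eq_matI simp: algebra_simps)
qed

lemma mev_mult:
  assumes M: "M \<in> carrier_mat d d"
  shows "mev d (p * q) M = mev d p M * mev d q M"
proof (induction p)
  case 0
  have "mev d q M \<in> carrier_mat d d" using M by auto
  then show ?case using M by simp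
next
  case (pCons a p)
  have c: "mev d p M \<in> carrier_mat d d" "mev d q M \<in> carrier_mat d d" using M by auto
  have "mev d (pCons a p * q) M = a \<cdot>\<^sub>m mev d q M + M * (mev d p M * mev d q M)"
  proof -
    have "mev d (pCons a p * q) M = a \<cdot>\<^sub>m mev d q M + mev d (pCons 0 (p * q)) M"
      using M by (simp add: mev_add mev_smult)
    also have "mev d (pCons 0 (p * q)) M = M * (mev d p M * mev d q M)"
      using M c pCons by (auto simp: mev_pCons intro!: eq_matI)
    finally show ?thesis .
  qed
  also have "\<dots> = (a \<cdot>\<^sub>m 1\<^sub>m d + M * mev d p M) * mev d q M"
  proof -
    have e1: "(a \<cdot>\<^sub>m 1\<^sub>m d + M * mev d p M) * mev d q M = (a \<cdot>\<^sub>m 1\<^sub>m d) * mev d q M + (M * mev d p M) * mev d q M"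
      using c M by (intro add_mult_distrib_mat) auto
    have e2: "(a \<cdot>\<^sub>m 1\<^sub>m d) * mev d q M = a \<cdot>\<^sub>m (1\<^sub>m d * mev d q M)"
      using c by (intro mult_smult_assoc_mat) auto
    have e3: "(M * mev d p M) * mev d q M = M * (mev d p M * mev d q M)"
      using c M by (intro assoc_mult_mat) auto
    show ?thesis unfolding e1 e2 e3 using c by simp
  qed
  finally show ?case using M by (simp add: mev_pCons)
qed

lemma smult_one_mat[simp]: "(1::complex) \<cdot>\<^sub>m A = A"
  by (rule eq_matI) auto

lemma mev_1[simp]: "M \<in> carrier_mat d d \<Longrightarrow> mev d 1 M = 1\<^sub>m d"
  unfolding one_pCons by (simp add: mev_pCons del: pCons_one)

lemma mev_linear: "M \<in> carrier_mat d d \<Longrightarrow> mev d [:c, 1:] M = c \<cdot>\<^sub>m 1\<^sub>m d + M"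
  by (simp add: mev_pCons del: pCons_one)

lemma mev_power:
  assumes M: "M \<in> carrier_mat d d"
  shows "mev d (p ^ k) M = mev d p M ^\<^sub>m k"
  by (induction k) (simp_all add: M mev_mult power_Suc2 del: power_Suc)




lemma smult_one_left: "A \<in> carrier_mat d d \<Longrightarrow> (a \<cdot>\<^sub>m 1\<^sub>m d) * A = a \<cdot>\<^sub>m (A::complex mat)"
  by (subst mult_smult_assoc_mat[of _ d d _ d]) auto

lemma smult_one_right: "A \<in> carrier_mat d d \<Longrightarrow> A * (a \<cdot>\<^sub>m 1\<^sub>m d) = a \<cdot>\<^sub>m (A::complex mat)"
  by (subst mult_smult_distrib[of _ d d _ d]) auto

lemma mev_intertwine:
  assumes H: "H \<in> carrier_mat d d" and X: "X \<in> carrier_mat d d" and Y: "Y \<in> carrier_mat d d"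
    and HX: "H * X = Y * H"
  shows "H * mev d p X = mev d p Y * H"
proof (induction p)
  case 0
  then show ?case using H by simp
next
  case (pCons a p)
  define N where "N = mev d p X"
  define N' where "N' = mev d p Y"
  have N: "N \<in> carrier_mat d d" and N': "N' \<in> carrier_mat d d" using X Y by (auto simp: N_def N'_def)
  have IH: "H * N = N' * H" using pCons(2) unfolding N_def N'_def .
  have "H * (a \<cdot>\<^sub>m 1\<^sub>m d + X * N) = H * (a \<cdot>\<^sub>m 1\<^sub>m d) + H * (X * N)"
    using H X N by (intro mult_add_distrib_mat) auto
  also have "H * (a \<cdot>\<^sub>m 1\<^sub>m d) = a \<cdot>\<^sub>m H" using H by (rule smult_one_right)
  also have "H * (X * N) = (H * X) * N" using H X N by (intro assoc_mult_mat[symmetric]) auto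
  also have "\<dots> = Y * (H * N)" unfolding HX using H Y N by (intro assoc_mult_mat) auto
  also have "\<dots> = (Y * N') * H" unfolding IH using H Y N' by (intro assoc_mult_mat[symmetric]) auto
  also have "a \<cdot>\<^sub>m H + (Y * N') * H = (a \<cdot>\<^sub>m 1\<^sub>m d + Y * N') * H"
    using H Y N' by (subst add_mult_distrib_mat[of _ d d]) (auto simp: smult_one_left)
  finally show ?case using X Y unfolding N_def N'_def by (simp add: mev_pCons)
qed

lemma mev_comm:
  assumes X: "X \<in> carrier_mat d d"
  shows "X * mev d p X = mev d p X * X"
  using mev_intertwine[OF X X X refl] .

definition cm :: "complex mat \<Rightarrow> complex mat" where "cm A = map_mat cnj A"

lemma cm_carrier[simp]: "cm A \<in> carrier_mat n m \<longleftrightarrow> A \<in> carrier_mat n m"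
  unfolding cm_def carrier_mat_def by auto

lemma cm_mult: assumes "A \<in> carrier_mat n k" "B \<in> carrier_mat k m"
  shows "cm (A * B) = cm A * cm B"
  using assms unfolding cm_def
  by (intro eq_matI) (auto simp: scalar_prod_def cnj_sum)

lemma cm_cm[simp]: "cm (cm A) = A"
  unfolding cm_def by (intro eq_matI) auto

lemma mev_cm:
  assumes X: "X \<in> carrier_mat d d"
  shows "cm (mev d p X) = mev d (map_poly cnj p) (cm X)"
proof (induction p)
  case 0
  then show ?case by (auto simp: cm_def intro!: eq_matI)
next
  case (pCons a p)
  have N: "mev d p X \<in> carrier_mat d d" using X by auto
  have "cm (a \<cdot>\<^sub>m 1\<^sub>m d + X * mev d p X) = cnj a \<cdot>\<^sub>m 1\<^sub>m d + cm X * cm (mev d p X)"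
    unfolding cm_mult[OF X N, symmetric] using X N by (auto simp: cm_def intro!: eq_matI)
  then show ?case using X pCons by (simp add: mev_pCons map_poly_pCons)
qed

lemma mev_transpose:
  assumes X: "X \<in> carrier_mat d d"
  shows "transpose_mat (mev d p X) = mev d p (transpose_mat X)"
proof (induction p)
  case 0
  then show ?case by simp
next
  case (pCons a p)
  have N: "mev d p X \<in> carrier_mat d d" using X by auto
  have XT: "transpose_mat X \<in> carrier_mat d d" using X by auto
  have "transpose_mat (a \<cdot>\<^sub>m 1\<^sub>m d + X * mev d p X) = a \<cdot>\<^sub>m 1\<^sub>m d + transpose_mat (mev d p X) * transpose_mat X"
    using X N by (subst transpose_add[of _ d d]) (auto simp: transpose_mult[of _ d d _ d] intro!: eq_matI)
  also have "transpose_mat (mev d p X) * transpose_mat X = transpose_mat X * mev d p (transpose_mat X)"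
    unfolding pCons(2) using mev_comm[OF XT] by simp
  finally show ?case using X XT by (simp add: mev_pCons)
qed

lemma adjoint_alt:
  assumes "A \<in> carrier_mat d d"
  shows "mat_adjoint A = transpose_mat (cm A)"
  using assms unfolding mat_adjoint_def cm_def
  by (intro eq_matI) (auto simp: mat_of_rows_def conjugate_complex_def)



lemma fb_ix:
  assumes "A \<in> carrier_mat n n" "B \<in> carrier_mat n n" "C \<in> carrier_mat n n" "D \<in> carrier_mat n n"
    and "i < n" "j < n"
  shows "four_block_mat A B C D $$ (i,j) = A $$ (i,j)"
    "four_block_mat A B C D $$ (i,j+n) = B $$ (i,j)"
    "four_block_mat A B C D $$ (i+n,j) = C $$ (i,j)"
    "four_block_mat A B C D $$ (i+n,j+n) = D $$ (i,j)"
proof -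
  have d: "dim_row A = n" "dim_col A = n" "dim_row D = n" "dim_col D = n" using assms by auto
  show "four_block_mat A B C D $$ (i,j) = A $$ (i,j)" using assms(5,6) by (subst index_mat_four_block) (simp_all add: d)
  show "four_block_mat A B C D $$ (i,j+n) = B $$ (i,j)" using assms(5,6) by (subst index_mat_four_block) (simp_all add: d)
  show "four_block_mat A B C D $$ (i+n,j) = C $$ (i,j)" using assms(5,6) by (subst index_mat_four_block) (simp_all add: d)
  show "four_block_mat A B C D $$ (i+n,j+n) = D $$ (i,j)" using assms(5,6) by (subst index_mat_four_block) (simp_all add: d)
qed

lemma four_block_inj:
  assumes e: "four_block_mat A B C D = four_block_mat A' B' C' D'"
    and c: "A \<in> carrier_mat n n" "B \<in> carrier_mat n n" "C \<in> carrier_mat n n" "D \<in> carrier_mat n n"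
    and c': "A' \<in> carrier_mat n n" "B' \<in> carrier_mat n n" "C' \<in> carrier_mat n n" "D' \<in> carrier_mat n n"
  shows "A = A' \<and> B = B' \<and> C = C' \<and> D = D'"
proof -
  note i1 = fb_ix[OF c] and i2 = fb_ix[OF c']
  have "A = A'" by (rule eq_matI) (use c c' i1(1) i2(1) e in auto)
  moreover have "B = B'" by (rule eq_matI) (use c c' i1(2) i2(2) e in auto)
  moreover have "C = C'" by (rule eq_matI) (use c c' i1(3) i2(3) e in auto)
  moreover have "D = D'" by (rule eq_matI) (use c c' i1(4) i2(4) e in auto)
  ultimately show ?thesis by blast
qed
lemma tri_annih:
  assumes T: "T \<in> carrier_mat d d" and ut: "upper_triangular T"
  shows "mev d (\<Prod>i<d. [:- T$$(i,i), 1:]) T = 0\<^sub>m d d"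
proof -
  have main: "k \<le> d \<Longrightarrow> \<forall>i<d. \<forall>j<k. mev d (\<Prod>i<k. [:- T$$(i,i), 1:]) T $$ (i,j) = 0" for k
  proof (induction k)
    case 0
    then show ?case by simp
  next
    case (Suc k)
    define Mk where "Mk = mev d (\<Prod>i<k. [:- T$$(i,i), 1:]) T"
    have Mk: "Mk \<in> carrier_mat d d" using T unfolding Mk_def by auto
    have IH: "\<And>i l. i < d \<Longrightarrow> l < k \<Longrightarrow> Mk $$ (i,l) = 0" using Suc unfolding Mk_def by auto
    define L where "L = (- T$$(k,k)) \<cdot>\<^sub>m 1\<^sub>m d + T"
    have L: "L \<in> carrier_mat d d" using T unfolding L_def by auto
    have eq: "mev d (\<Prod>i<Suc k. [:- T$$(i,i), 1:]) T = Mk * L"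
    proof -
      have "(\<Prod>i<Suc k. [:- T$$(i,i), 1:]) = (\<Prod>i<k. [:- T$$(i,i), 1:]) * [:- T$$(k,k), 1:]"
        by simp
      note eqp = this
      show ?thesis unfolding eqp mev_mult[OF T] mev_linear[OF T] Mk_def L_def ..
    qed
    show ?case
    proof (intro allI impI)
      fix i j assume i: "i < d" and j: "j < Suc k"
      have "(Mk * L) $$ (i,j) = (\<Sum>l\<in>{0..<d}. Mk $$ (i,l) * L $$ (l,j))"
        using Mk L i j Suc(2) by (auto simp: scalar_prod_def)
      also have "\<dots> = 0"
      proof (rule sum.neutral, intro ballI)
        fix l assume l: "l \<in> {0..<d}"
        show "Mk $$ (i,l) * L $$ (l,j) = 0"
        proof (cases "l < k")
          case True then show ?thesis using IH i by simp
        next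
          case False
          have jd: "j < d" using j Suc(2) by auto
          have Llj: "L $$ (l,j) = (if l = j then - T$$(k,k) else 0) + T $$ (l,j)"
            unfolding L_def using l jd T by auto
          show ?thesis
          proof (cases "j < l")
            case True
            then have "T $$ (l,j) = 0" using ut l T by (auto intro: upper_triangularD)
            then show ?thesis using Llj True by simp
          next
            case False
            then have "l = j" "j = k" using \<open>\<not> l < k\<close> j by auto
            then show ?thesis using Llj by simp
          qed
        qed
      qed
      finally show "mev d (\<Prod>i<Suc k. [:- T$$(i,i), 1:]) T $$ (i,j) = 0" unfolding eq .
    qed
  qed
  show ?thesis using main[of d] T by (intro eq_matI) auto
qed

definition Jm :: "nat \<Rightarrow> complex mat" where
  "Jm n = four_block_mat (0\<^sub>m n n) (1\<^sub>m n) (- 1\<^sub>m n) (0\<^sub>m n n)"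

lemma cm_four_block: 
  assumes "A \<in> carrier_mat n n" "B \<in> carrier_mat n n" "C \<in> carrier_mat n n" "D \<in> carrier_mat n n"
  shows "cm (four_block_mat A B C D) = four_block_mat (cm A) (cm B) (cm C) (cm D)"
proof -
  have c: "cm A \<in> carrier_mat n n" "cm B \<in> carrier_mat n n" "cm C \<in> carrier_mat n n" "cm D \<in> carrier_mat n n"
    using assms by auto
  have X: "four_block_mat A B C D \<in> carrier_mat (n+n) (n+n)" using assms by auto
  have Y: "four_block_mat (cm A) (cm B) (cm C) (cm D) \<in> carrier_mat (n+n) (n+n)" using c by auto
  have dX[simp]: "dim_row (four_block_mat A B C D) = n+n" "dim_col (four_block_mat A B C D) = n+n" using X by auto
  have dA[simp]: "dim_row A = n" "dim_col A = n" "dim_row B = n" "dim_col B = n" "dim_row C = n" "dim_col C = n" "dim_row D = n" "dim_col D = n"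
    using assms by auto
  show ?thesis
  proof (rule eq_matI)
    fix i j assume "i < dim_row (four_block_mat (cm A) (cm B) (cm C) (cm D))"
        "j < dim_col (four_block_mat (cm A) (cm B) (cm C) (cm D))"
    then have ij: "i < n + n" "j < n + n" using Y by auto
    show "cm (four_block_mat A B C D) $$ (i, j) = four_block_mat (cm A) (cm B) (cm C) (cm D) $$ (i, j)"
    proof (cases "i < n")
      case True
      then show ?thesis
      proof (cases "j < n")
        case True
        then show ?thesis using fb_ix(1)[OF assms \<open>i<n\<close> True] fb_ix(1)[OF c \<open>i<n\<close> True] ij X \<open>i<n\<close> True
          unfolding cm_def by simp
      next
        case False
        then obtain j' where j': "j = j' + n" "j' < n" using ij by (metis add.commute le_Suc_ex less_diff_conv2 not_less add_diff_cancel_left')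
        then show ?thesis using fb_ix(2)[OF assms \<open>i<n\<close> j'(2)] fb_ix(2)[OF c \<open>i<n\<close> j'(2)] ij X \<open>i<n\<close> j'
          unfolding cm_def by simp
      qed
    next
      case False
      then obtain i' where i': "i = i' + n" "i' < n" using ij by (metis add.commute le_Suc_ex less_diff_conv2 not_less add_diff_cancel_left')
      then show ?thesis
      proof (cases "j < n")
        case True
        then show ?thesis using fb_ix(3)[OF assms i'(2) True] fb_ix(3)[OF c i'(2) True] ij X i' True
          unfolding cm_def by simp
      next
        case False
        then obtain j' where j': "j = j' + n" "j' < n" using ij by (metis add.commute le_Suc_ex less_diff_conv2 not_less add_diff_cancel_left')
        then show ?thesis using fb_ix(4)[OF assms i'(2) j'(2)] fb_ix(4)[OF c i'(2) j'(2)] ij X i' j'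
          unfolding cm_def by simp
      qed
    qed
  qed (use X Y in auto)
qed

lemma cm_uminus: "cm (- A) = - cm A"
  unfolding cm_def by (intro eq_matI) auto

lemma Jm_carrier[simp]: "Jm n \<in> carrier_mat (2*n) (2*n)"
  unfolding Jm_def using four_block_carrier_mat[of "0\<^sub>m n n" n n "0\<^sub>m n n" n n] by (simp add: mult_2)

lemma omega_fwd:
  assumes "M \<in> Omega n"
  shows "M * Jm n = Jm n * cm M"
proof -
  from assms obtain A1 A2 where A: "A1 \<in> carrier_mat n n" "A2 \<in> carrier_mat n n"
    and M: "M = four_block_mat A1 (cm A2) (- A2) (cm A1)"
    unfolding Omega_def cm_def by auto
  have c: "cm A1 \<in> carrier_mat n n" "cm A2 \<in> carrier_mat n n" "- A2 \<in> carrier_mat n n" using A by auto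
  have "M * Jm n = four_block_mat (- cm A2) A1 (- cm A1) (- A2)"
    unfolding M Jm_def using A c
    by (subst mult_four_block_mat[of _ n n _ n _ n]) auto
  moreover have "Jm n * cm M = four_block_mat (- cm A2) A1 (- cm A1) (- A2)"
    unfolding M Jm_def cm_four_block[OF A(1) c(2) c(3) c(1)] cm_uminus using A c
    by (subst mult_four_block_mat[of _ n n _ n _ n]) auto
  ultimately show ?thesis by simp
qed

lemma omega_bwd:
  assumes M: "M \<in> carrier_mat (2*n) (2*n)" and MJ: "M * Jm n = Jm n * cm M"
  shows "M \<in> Omega n"
proof -
  obtain M1 M2 M3 M4 where sp: "split_block M n n = (M1,M2,M3,M4)" by (cases "split_block M n n") auto
  have dims: "dim_row M = n + n" "dim_col M = n + n" using M by auto
  note S = split_block[OF sp dims]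
  have c: "cm M1 \<in> carrier_mat n n" "cm M2 \<in> carrier_mat n n" "cm M3 \<in> carrier_mat n n" "cm M4 \<in> carrier_mat n n"
    using S by auto
  have "M * Jm n = four_block_mat (- M2) M1 (- M4) M3"
    unfolding S(5) Jm_def using S
    by (subst mult_four_block_mat[of _ n n _ n _ n]) auto
  moreover have "Jm n * cm M = four_block_mat (cm M3) (cm M4) (- cm M1) (- cm M2)"
    unfolding S(5) Jm_def cm_four_block[OF S(1-4)] using S c
    by (subst mult_four_block_mat[of _ n n _ n _ n]) auto
  ultimately have "four_block_mat (- M2) M1 (- M4) M3 = four_block_mat (cm M3) (cm M4) (- cm M1) (- cm M2)"
    using MJ by simp
  from four_block_inj[OF this] S c
  have e: "- M2 = cm M3" "M1 = cm M4" by auto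
  have mm: "- (- A) = (A::complex mat)" for A by (intro eq_matI) auto
  have e2: "M2 = cm (- M3)" unfolding cm_uminus e(1)[symmetric] mm ..
  have "M = four_block_mat M1 (map_mat cnj (- M3)) (- (- M3)) (map_mat cnj M1)"
    unfolding S(5) using e e2 mm by (auto simp: cm_def[symmetric])
  then show ?thesis unfolding Omega_def using M S by (intro CollectI conjI exI[of _ M1] exI[of _ "- M3"]) auto
qed




interpretation ofr: map_poly_comm_ring_hom "complex_of_real"
  by (rule map_poly_comm_ring_hom.intro, rule of_real_hom.comm_ring_hom_axioms)

lemma zero_smult_one_add: "B \<in> carrier_mat d d \<Longrightarrow> (0::complex) \<cdot>\<^sub>m 1\<^sub>m d + B = B"
  by (intro eq_matI) auto

theorem mainTheorem9:
  fixes n m :: nat and H B :: "complex mat"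
  assumes "odd m"
    and "H \<in> Omega n" and "invertible_mat H" and "hermitian_mat H"
    and "B \<in> Omega n" and "H_selfadjoint H B"
    and "spectrum B \<subseteq> {z. z \<in> \<real> \<and> Re z < 0}"
  shows "\<exists>A \<in> Omega n. H_selfadjoint H A \<and> A ^\<^sub>m m = B"
proof -
  define d where "d = 2 * n"
  have B: "B \<in> carrier_mat d d" using assms(5) unfolding Omega_def d_def by auto
  have Hc: "H \<in> carrier_mat d d" using assms(2) unfolding Omega_def d_def by auto
  obtain ds where cp: "char_poly B = (\<Prod>a\<leftarrow>ds. [:- a, 1:])" and lds: "length ds = d"
    using char_poly_factorized[OF B] by blast
  obtain T P Q where sch: "schur_decomposition B ds = (T,P,Q)" by (cases "schur_decomposition B ds") auto
  from schur_decomposition[OF B cp sch] have sim: "similar_mat_wit B T P Q"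
    and ut: "upper_triangular T" and diag: "diag_mat T = ds" by auto
  note SW = similar_mat_witD2[OF B sim]
  have T: "T \<in> carrier_mat d d" and Pc: "P \<in> carrier_mat d d" and Qc: "Q \<in> carrier_mat d d"
    using SW by auto
  have tin: "T $$ (i,i) \<in> set ds" if "i < d" for i
    using that T unfolding diag[symmetric] diag_mat_def by auto
  have spec: "a \<in> spectrum B" if "a \<in> set ds" for a
  proof -
    have gen: "a \<in> set xs \<Longrightarrow> [:- a, 1:] dvd (\<Prod>a\<leftarrow>xs. [:- a, 1:])" for xs :: "complex list"
      by (induction xs) (auto simp del: mult_pCons_left intro: dvd_mult)
    have "[:- a, 1:] dvd char_poly B" unfolding cp using gen[OF that] .
    then have "poly (char_poly B) a = 0" using poly_eq_0_iff_dvd by blast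
    then show ?thesis unfolding spectrum_root_char_poly[OF B] by simp
  qed
  have treal: "complex_of_real (Re (T $$ (i,i))) = T $$ (i,i)" "Re (T $$ (i,i)) < 0" if "i < d" for i
    using spec[OF tin[OF that]] assms(7) by (auto simp: of_real_Re)
  define S where "S = (\<lambda>i. Re (T $$ (i,i))) ` {..<d}"
  have S: "finite S" "\<forall>x\<in>S. x < 0" unfolding S_def using treal by auto
  define r where "r = (\<Prod>x\<in>S. [:-x,1:])"
  obtain p where "r^d dvd p^m - [:0,1:]" using real_root_poly[OF S assms(1), of d] unfolding r_def by blast
  then obtain s where ps: "p^m - [:0,1:] = r^d * s" by (auto elim: dvdE)
  define pc where "pc = map_poly complex_of_real p"
  define rc where "rc = map_poly complex_of_real r"
  define sc where "sc = map_poly complex_of_real s"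
  have pcs: "pc^m = [:0,1:] + rc^d * sc"
  proof -
    have "map_poly complex_of_real (p^m - [:0,1:]) = map_poly complex_of_real (r^d * s)" using ps by simp
    then have "pc^m - [:0,1:] = rc^d * sc" unfolding pc_def rc_def sc_def
      by (simp add: ofr.hom_minus ofr.hom_mult ofr.hom_power)
    then show ?thesis by (simp add: algebra_simps)
  qed
  have rc: "rc = (\<Prod>x\<in>S. [:- complex_of_real x, 1:])"
    unfolding rc_def r_def by (simp add: ofr.hom_prod)
  define q where "q = (\<Prod>i<d. [:- T$$(i,i), 1:])"
  have qdvd: "q dvd rc^d"
  proof -
    have "rc^d = (\<Prod>i<d. rc)" by simp
    moreover have "q dvd (\<Prod>i<d. rc)" unfolding q_def
    proof (rule prod_dvd_prod)
      fix i assume i: "i \<in> {..<d}"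
      have "Re (T$$(i,i)) \<in> S" using i unfolding S_def by auto
      then have "[:- complex_of_real (Re (T$$(i,i))), 1:] dvd rc" unfolding rc
        using S(1) by (intro dvd_prodI) auto
      then show "[:- T$$(i,i), 1:] dvd rc" using treal(1)[of i] i by simp
    qed
    ultimately show ?thesis by simp
  qed
  then obtain w where w: "rc^d = q * w" by (auto elim: dvdE)
  have qT: "mev d q T = 0\<^sub>m d d" unfolding q_def by (rule tri_annih[OF T ut])
  have QB: "Q * B = T * Q"
  proof -
    have "Q * B = Q * (P * T * Q)" by (subst SW(3), rule refl)
    also have "\<dots> = (Q * (P * T)) * Q" using Pc Qc T by (intro assoc_mult_mat[symmetric]) auto
    also have "Q * (P * T) = (Q * P) * T" using Pc Qc T by (intro assoc_mult_mat[symmetric]) auto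
    also have "Q * P = 1\<^sub>m d" by (rule SW(2))
    also have "1\<^sub>m d * T = T" using T by simp
    finally show ?thesis .
  qed
  have qB: "mev d q B = 0\<^sub>m d d"
  proof -
    have "Q * mev d q B = mev d q T * Q" by (rule mev_intertwine[OF Qc B T QB])
    then have "Q * mev d q B = 0\<^sub>m d d" using qT Qc by simp
    then have "P * (Q * mev d q B) = 0\<^sub>m d d" using Pc by simp
    moreover have "P * (Q * mev d q B) = mev d q B"
    proof -
      have "P * (Q * mev d q B) = (P * Q) * mev d q B" using Pc Qc B by (intro assoc_mult_mat[symmetric]) auto
      also have "P * Q = 1\<^sub>m d" by (rule SW(1))
      finally show ?thesis using B by simp
    qed
    ultimately show ?thesis by simp
  qed
  define A where "A = mev d pc B"
  have Ac: "A \<in> carrier_mat d d" unfolding A_def using B by simp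
  have Am: "A ^\<^sub>m m = B"
  proof -
    have "A ^\<^sub>m m = mev d (pc^m) B" unfolding A_def using mev_power[OF B] by simp
    also have "\<dots> = mev d [:0,1:] B + mev d q B * mev d w B * mev d sc B"
      unfolding pcs w using B by (simp add: mev_add mev_mult)
    also have "\<dots> = B" using B by (simp add: qB mev_linear zero_smult_one_add)
    finally show ?thesis .
  qed
  have pcr: "map_poly cnj pc = pc" unfolding pc_def
    by (subst map_poly_map_poly) (auto simp: o_def)
  have cmA: "cm A = mev d pc (cm B)" unfolding A_def mev_cm[OF B] pcr ..
  have cmB: "cm B \<in> carrier_mat d d" using B by simp
  have "Jm n * mev d pc (cm B) = mev d pc B * Jm n"
    using mev_intertwine[of "Jm n" d "cm B" B pc] omega_fwd[OF assms(5)] cmB B by (simp add: d_def)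
  then have AJ: "A * Jm n = Jm n * cm A" unfolding cmA by (simp add: A_def)
  have AO: "A \<in> Omega n" using omega_bwd[of A n] Ac AJ by (simp add: d_def)
  have adjB: "mat_adjoint B = transpose_mat (cm B)" using adjoint_alt[OF B] .
  have HB: "H * B = transpose_mat (cm B) * H" using assms(6) unfolding H_selfadjoint_def adjB .
  have "H * A = mev d pc (transpose_mat (cm B)) * H"
    unfolding A_def using mev_intertwine[OF Hc B _ HB] cmB by simp
  also have "mev d pc (transpose_mat (cm B)) = transpose_mat (cm A)"
    unfolding cmA mev_transpose[OF cmB] ..
  also have "\<dots> = mat_adjoint A" using adjoint_alt[OF Ac] by simp
  finally have "H_selfadjoint H A" unfolding H_selfadjoint_def .
  then show ?thesis using AO Am by blast
qed


end
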